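(* Let $A=\{a_1<\cdots<a_N\}$ be a finite set of real numbers, with $N$ sufficiently large (larger than some absolute constant). Then there exist a nonempty set $H'\subseteq H(A)$ of size $m$ and a positive integer $L$ such that (i) $Lm\geq N/(3\log_2N)$; (ii) $|A+A-A| \geq Lm^2/2$; (iii) for each $h\in H'$, $L\leq |A_h|\leq 2L$.
   Context: For $A=\{a_1<\cdots<a_N\}\subset\mathbb{R}$, $H(A)=\{a_{j+1}-a_j:j=1,\ldots,N-1\}$ is the set of consecutive differences of $A$, and for $h\in H(A)$, $A_h=\{a_i\in A: a_{i+1}-a_i=h\}$. $A+A-A=\{a+b-c:a,b,c\in A\}$. *)

theory Defs
  imports Complex_Main
begin

definition next_in :: "real set \<Rightarrow> real \<Rightarrow> real" where
  "next_in A a = Min {b \<in> A. a < b}"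

definition non_max :: "real set \<Rightarrow> real set" where
  "non_max A = {a \<in> A. \<exists>b\<in>A. a < b}"

definition cons_diffs :: "real set \<Rightarrow> real set" where
  "cons_diffs A = {next_in A a - a | a. a \<in> non_max A}"

definition diff_class :: "real set \<Rightarrow> real \<Rightarrow> real set" where
  "diff_class A h = {a \<in> non_max A. next_in A a - a = h}"

definition sumsum_diff :: "real set \<Rightarrow> real set" where
  "sumsum_diff A = {a + b - c | a b c. a \<in> A \<and> b \<in> A \<and> c \<in> A}"

end

theory Submission
  imports Defs "HOL-Library.Discrete_Functions"
begin

lemma next_props:
  assumes "finite A" "a \<in> non_max A"
  shows "next_in A a \<in> A \<and> a < next_in A a \<and> (\<forall>b\<in>A. a < b \<longrightarrow> next_in A a \<le> b)"
proof -
  have ne: "{b \<in> A. a < b} \<noteq> {}" using assms(2) unfolding non_max_def by auto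
  have fin: "finite {b \<in> A. a < b}" using assms(1) by auto
  have "next_in A a \<in> {b \<in> A. a < b}" unfolding next_in_def using Min_in[OF fin ne] .
  moreover have "\<forall>b\<in>A. a < b \<longrightarrow> next_in A a \<le> b" unfolding next_in_def using fin by auto
  ultimately show ?thesis by auto
qed

lemma card_non_max:
  assumes "finite A" "A \<noteq> {}"
  shows "card (non_max A) = card A - 1"
proof -
  have "non_max A = A - {Max A}"
    unfolding non_max_def using assms
    by (auto, meson Max_ge not_le, metis Max.coboundedI Max_in antisym_conv1)
  then show ?thesis using assms by (simp add: Max_in)
qed

lemma sum_classes:
  assumes "finite A"
  shows "(\<Sum>h\<in>cons_diffs A. card (diff_class A h)) = card (non_max A)"
proof -
  let ?g = "\<lambda>a. next_in A a - a"
  have fS: "finite (non_max A)" using assms unfolding non_max_def by auto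
  have T: "cons_diffs A = ?g ` non_max A" unfolding cons_diffs_def by auto
  have "(\<Sum>h\<in>cons_diffs A. (\<Sum>x\<in>{x. x \<in> non_max A \<and> ?g x = h}. (1::nat))) = (\<Sum>x\<in>non_max A. 1)"
    by (rule sum.group) (use fS T in auto)
  moreover have "\<And>h. {x. x \<in> non_max A \<and> ?g x = h} = diff_class A h"
    unfolding diff_class_def by auto
  ultimately show ?thesis by simp
qed

lemma pigeon:
  fixes f :: "'a \<Rightarrow> real"
  assumes "finite I" "I \<noteq> {}" "(\<Sum>i\<in>I. f i) \<ge> T"
  shows "\<exists>i\<in>I. real (card I) * f i \<ge> T"
proof (rule ccontr)
  assume "\<not> ?thesis"
  then have "\<forall>i\<in>I. f i < T / real (card I)"
    using assms by (auto simp: field_simps card_gt_0_iff)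
  then have "(\<Sum>i\<in>I. f i) < (\<Sum>i\<in>I. T / real (card I))"
    using assms by (intro sum_strict_mono) auto
  also have "\<dots> = T" using assms by simp
  finally show False using assms by simp
qed

lemma sumset_bound:
  assumes fin: "finite A" and sub: "H' \<subseteq> cons_diffs A"
    and big: "\<forall>h\<in>H'. L \<le> card (diff_class A h)"
  shows "real L * real (card H')^2 / 2 \<le> real (card (sumsum_diff A))"
proof -
  have finH: "finite (cons_diffs A)"
    unfolding cons_diffs_def non_max_def using fin by auto
  have finH': "finite H'" using finH sub finite_subset by blast
  define P where "P = {(h, h'). h \<in> H' \<and> h' \<in> H' \<and> h' \<le> h}"
  have finP: "finite P"
    by (rule finite_subset[of _ "H' \<times> H'"]) (use finH' in \<open>auto simp: P_def\<close>)
  have "H' \<times> H' \<subseteq> P \<union> converse P" unfolding P_def by auto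
  then have "card (H' \<times> H') \<le> card (P \<union> converse P)"
    using finP by (intro card_mono) auto
  also have "\<dots> \<le> card P + card (converse P)" by (rule card_Un_le)
  also have "\<dots> = 2 * card P" by simp
  finally have cP: "card H' ^ 2 \<le> 2 * card P" by (simp add: card_cartesian_product power2_eq_square)
  define D where "D = Sigma P (\<lambda>p. diff_class A (fst p))"
  have fincl: "\<And>h. finite (diff_class A h)"
    unfolding diff_class_def non_max_def using fin by auto
  have cD: "card D = (\<Sum>p\<in>P. card (diff_class A (fst p)))"
    unfolding D_def using finP fincl by (simp add: card_SigmaI)
  have "(\<Sum>p\<in>P. L) \<le> (\<Sum>p\<in>P. card (diff_class A (fst p)))"
    by (rule sum_mono) (use big in \<open>auto simp: P_def\<close>)
  then have LD: "L * card P \<le> card D" using cD by (simp add: mult.commute)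
  define f where "f = (\<lambda>x::(real\<times>real)\<times>real. snd x + snd (fst x))"
  have inj: "inj_on f D"
  proof (rule inj_onI)
    fix x y assume x: "x \<in> D" and y: "y \<in> D" and e: "f x = f y"
    obtain h1 g1 a where xe: "x = ((h1, g1), a)" by (metis prod.collapse)
    obtain h2 g2 b where ye: "y = ((h2, g2), b)" by (metis prod.collapse)
    have xa: "h1 \<in> H'" "g1 \<in> H'" "g1 \<le> h1" "a \<in> diff_class A h1"
      using x unfolding xe D_def P_def by auto
    have yb: "h2 \<in> H'" "g2 \<in> H'" "g2 \<le> h2" "b \<in> diff_class A h2"
      using y unfolding ye D_def P_def by auto
    have e': "a + g1 = b + g2" using e unfolding f_def xe ye by simp
    have pos: "\<And>h. h \<in> H' \<Longrightarrow> h > 0"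
      using sub next_props[OF fin] unfolding cons_diffs_def by fastforce
    have key: "\<And>a b h1 h2 g1 (g2::real). a \<in> diff_class A h1 \<Longrightarrow> b \<in> diff_class A h2 \<Longrightarrow>
       g1 \<le> h1 \<Longrightarrow> g2 > 0 \<Longrightarrow> a < b \<Longrightarrow> a + g1 \<noteq> b + g2"
    proof -
      fix a b h1 h2 g1 and g2::real
      assume a: "a \<in> diff_class A h1" and b: "b \<in> diff_class A h2" and
        "g1 \<le> h1" "g2 > 0" "a < b"
      have an: "a \<in> non_max A" "next_in A a - a = h1" using a unfolding diff_class_def by auto
      have bA: "b \<in> A" using b unfolding diff_class_def non_max_def by auto
      have "next_in A a \<le> b" using next_props[OF fin an(1)] bA \<open>a < b\<close> by auto
      then show "a + g1 \<noteq> b + g2" using an \<open>g1 \<le> h1\<close> \<open>g2 > 0\<close> by linarith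
    qed
    have "a = b"
      using key[OF xa(4) yb(4) xa(3) pos[OF yb(2)]] key[OF yb(4) xa(4) yb(3) pos[OF xa(2)]] e'
      by (metis linorder_neqE_linordered_idom)
    moreover have "h1 = h2" using xa(4) yb(4) \<open>a = b\<close> unfolding diff_class_def by auto
    ultimately show "x = y" using e' xe ye by simp
  qed
  have img: "f ` D \<subseteq> sumsum_diff A"
  proof
    fix z assume "z \<in> f ` D"
    then obtain h g a where m: "((h, g), a) \<in> D" "z = a + g" unfolding f_def by auto
    have "g \<in> cons_diffs A" "a \<in> diff_class A h" using m sub unfolding D_def P_def by auto
    then obtain c where c: "c \<in> non_max A" "g = next_in A c - c" unfolding cons_diffs_def by auto
    have "next_in A c \<in> A" "c \<in> A" using next_props[OF fin c(1)] c(1) unfolding non_max_def by auto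
    moreover have "a \<in> A" using \<open>a \<in> diff_class A h\<close> unfolding diff_class_def non_max_def by auto
    ultimately show "z \<in> sumsum_diff A" unfolding sumsum_diff_def using m c by force
  qed
  have finS: "finite (sumsum_diff A)"
  proof -
    have "sumsum_diff A = (\<lambda>(a, b, c). a + b - c) ` (A \<times> A \<times> A)"
      unfolding sumsum_diff_def by force
    then show ?thesis using fin by simp
  qed
  have "card D = card (f ` D)" using card_image[OF inj] by simp
  also have "\<dots> \<le> card (sumsum_diff A)" using card_mono[OF finS img] .
  finally have "L * card P \<le> card (sumsum_diff A)" using LD by simp
  then have r1: "real L * real (card P) \<le> real (card (sumsum_diff A))" by (metis of_nat_le_iff of_nat_mult)
  have "real (card H') ^ 2 \<le> 2 * real (card P)" using cP by (metis of_nat_le_iff of_nat_mult of_nat_power of_nat_numeral)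
  then have "real L * real (card H')^2 \<le> real L * (2 * real (card P))" by (intro mult_left_mono) auto
  then show ?thesis using r1 by simp
qed

lemma final_ineq:
  fixes N l K :: real
  assumes "N \<ge> 16" "l \<ge> 4" "K \<le> l" "K \<ge> 0"
  shows "N / (3 * l) \<le> (N - 1) / (2 * (K + 1))"
proof -
  have "(l - 2) * (N - 3) \<ge> 2 * 13" using assms by (intro mult_mono) auto
  then have "2 * (l + 1) * N \<le> 3 * l * (N - 1)" by (simp add: algebra_simps)
  moreover have "2 * (K + 1) * N \<le> 2 * (l + 1) * N" using assms by simp
  ultimately have "N * (2 * (K + 1)) \<le> (N - 1) * (3 * l)" by (simp add: algebra_simps)
  then show ?thesis using assms by (simp add: divide_simps)
qed

theorem lemma6:
  "\<exists>N0::nat. \<forall>A :: real set. finite A \<and> card A \<ge> N0 \<longrightarrow>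
     (\<exists>H' :: real set. \<exists>L :: nat.
        H' \<noteq> {} \<and> H' \<subseteq> cons_diffs A \<and> L > 0 \<and>
        real L * real (card H') \<ge> real (card A) / (3 * log 2 (real (card A))) \<and>
        real (card (sumsum_diff A)) \<ge> real L * real (card H')^2 / 2 \<and>
        (\<forall>h\<in>H'. L \<le> card (diff_class A h) \<and> card (diff_class A h) \<le> 2 * L))"
proof (intro exI[of _ 16] allI impI, elim conjE)
  fix A :: "real set"
  assume fin: "finite A" and N16: "16 \<le> card A"
  define N where "N = card A"
  define H where "H = cons_diffs A"
  define c where "c = (\<lambda>h. card (diff_class A h))"
  have Ane: "A \<noteq> {}" using N16 by auto
  have finH: "finite H"
    unfolding H_def cons_diffs_def non_max_def using fin by auto
  have sumc: "(\<Sum>h\<in>H. c h) = N - 1"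
    using sum_classes[OF fin] card_non_max[OF fin Ane] unfolding H_def c_def N_def by simp
  have finNM: "finite (non_max A)" using fin unfolding non_max_def by auto
  have c1: "c h \<ge> 1" if "h \<in> H" for h
  proof -
    from that obtain a where "a \<in> non_max A" "h = next_in A a - a"
      unfolding H_def cons_diffs_def by auto
    then have "a \<in> diff_class A h" unfolding diff_class_def by auto
    moreover have "finite (diff_class A h)" using finNM unfolding diff_class_def by auto
    ultimately show ?thesis unfolding c_def
      by (metis One_nat_def Suc_leI card_gt_0_iff empty_iff)
  qed
  have cN: "c h \<le> N - 1" for h
  proof -
    have "diff_class A h \<subseteq> non_max A" unfolding diff_class_def by auto
    then show ?thesis unfolding c_def using card_mono[OF finNM] card_non_max[OF fin Ane] N_def by simp
  qed
  define k where "k = (\<lambda>h. floor_log (c h))"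
  define K where "K = floor_log (N - 1)"
  have kK: "k h \<le> K" for h unfolding k_def K_def using cN floor_log_le_iff by blast
  have grp: "(\<Sum>j\<in>{0..K}. (\<Sum>h\<in>{h. h \<in> H \<and> k h = j}. c h)) = (\<Sum>h\<in>H. c h)"
    by (rule sum.group) (use finH kK in auto)
  have "\<exists>j\<in>{0..K}. real (card {0..K}) * real (\<Sum>h\<in>{h. h \<in> H \<and> k h = j}. c h) \<ge> real (N - 1)"
    by (rule pigeon) (use grp sumc in \<open>auto simp flip: of_nat_sum\<close>)
  then obtain j where j: "j \<le> K"
    and jb: "real (K + 1) * real (\<Sum>h\<in>{h. h \<in> H \<and> k h = j}. c h) \<ge> real (N - 1)" by auto
  define H' where "H' = {h. h \<in> H \<and> k h = j}"
  define L :: nat where "L = 2 ^ j"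
  have finH': "finite H'" using finH unfolding H'_def by auto
  have Lc: "L \<le> c h \<and> c h \<le> 2 * L" if "h \<in> H'" for h
  proof -
    have "c h > 0" using c1 that unfolding H'_def by force
    then show ?thesis using floor_log_exp2_le[of "c h"] floor_log_exp2_ge[of "c h"] that
      unfolding H'_def L_def k_def by auto
  qed
  have Sle: "(\<Sum>h\<in>H'. c h) \<le> card H' * (2 * L)"
    using sum_bounded_above[of H' c "2 * L"] Lc by auto
  have N1: "real (N - 1) = real N - 1" using N16 N_def by simp
  have Spos: "(\<Sum>h\<in>H'. c h) > 0"
  proof (rule ccontr)
    assume "\<not> ?thesis"
    then have "(\<Sum>h\<in>H'. c h) = 0" by simp
    then show False using jb N1 N16 N_def unfolding H'_def by simp
  qed
  then have H'ne: "H' \<noteq> {}" by (metis sum.empty less_irrefl)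
  have Hsub: "H' \<subseteq> cons_diffs A" unfolding H'_def H_def by auto
  have Lpos: "L > 0" unfolding L_def by simp
  have lN: "log 2 (real N) \<ge> 4"
  proof -
    have "log 2 (2 ^ 4) \<le> log 2 (real N)" using N16 N_def by (intro log_le_cancel_iff[THEN iffD2]) auto
    moreover have "log 2 ((2::real) ^ 4) = 4" using log_pow_cancel[of "2::real" 4] by simp
    ultimately show ?thesis by linarith
  qed
  have KN: "real K \<le> log 2 (real N)"
  proof -
    have "2 ^ K \<le> N - 1" unfolding K_def using N16 N_def by (intro floor_log_exp2_le) auto
    then have "real (2 ^ K) \<le> real N" by linarith
    then have "log 2 (2 ^ K) \<le> log 2 (real N)" using N16 N_def by (intro log_le_cancel_iff[THEN iffD2]) auto
    then show ?thesis by simp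
  qed
  have "real N / (3 * log 2 (real N)) \<le> (real N - 1) / (2 * (real K + 1))"
    by (rule final_ineq) (use N16 N_def lN KN in auto)
  also have "\<dots> \<le> real (\<Sum>h\<in>H'. c h) / 2"
    using jb N1 unfolding H'_def by (simp add: divide_simps algebra_simps)
  also have "\<dots> \<le> real L * real (card H')"
  proof -
    have "real (\<Sum>h\<in>H'. c h) \<le> real (card H' * (2 * L))" using Sle by linarith
    then show ?thesis by (simp add: algebra_simps)
  qed
  finally have i: "real L * real (card H') \<ge> real (card A) / (3 * log 2 (real (card A)))"
    unfolding N_def .
  have ii: "real (card (sumsum_diff A)) \<ge> real L * real (card H')^2 / 2"
    by (rule sumset_bound[OF fin Hsub]) (use Lc in \<open>auto simp: c_def\<close>)
  show "\<exists>H' L. H' \<noteq> {} \<and> H' \<subseteq> cons_diffs A \<and> L > 0 \<and>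
        real L * real (card H') \<ge> real (card A) / (3 * log 2 (real (card A))) \<and>
        real (card (sumsum_diff A)) \<ge> real L * real (card H')^2 / 2 \<and>
        (\<forall>h\<in>H'. L \<le> card (diff_class A h) \<and> card (diff_class A h) \<le> 2 * L)"
    using H'ne Hsub Lpos i ii Lc unfolding c_def by blast
qed

end
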